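(* Let $M$ be a matching of size $k$ and let $N$ be a matching of size $k+2$ having a separated pair $K$ such that $N-K$ equals $M$ up to cyclic relabeling. Then the connected component of $N$ in $\mathbf{DCM}_{k+2}$ has at least as many vertices as the connected component of $M$ in $\mathbf{DCM}_k$.
   Context: Let $k\ge 1$ and let $X_{2k}=\{P_1,\dots,P_{2k}\}$ be $2k$ points in convex position in the plane, labeled in clockwise cyclic order; indices are taken modulo $2k$. A matching of $X_{2k}$ means a set of $k$ pairwise non-crossing straight segments (edges) with endpoints in $X_{2k}$ covering every point exactly once; its size is $k$. Two matchings $M,M'$ of $X_{2k}$ are disjoint compatible if they have no common edge and no edge of $M$ crosses an edge of $M'$. $\mathbf{DCM}_k$ is the graph whose vertices are the matchings of $X_{2k}$, two being adjacent iff they are disjoint compatible. A block of a matching $M$ is a pair of edges $\{P_iP_{i+3},P_{i+1}P_{i+2}\}\subseteq M$; an antiblock is a pair of edges $\{P_iP_{i+1},P_{i+2}P_{i+3}\}\subseteq M$; a separated pair is a block or an antiblock. If $K$ is a separated pair of a matching $N$ of size $k+2$, then $N-K$ denotes the set $N\setminus K$, regarded as a matching of the remaining $2k$ points (which are in convex position) with their inherited cyclic order, i.e. as a matching of size $k$ defined up to cyclic relabeling. *)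

theory Defs
  imports Main
begin

text \<open>Points P_1..P_n in convex position, clockwise, are labelled 0..n-1.
  An edge is a two-element set of labels. For points in convex position two
  segments cross iff their endpoints interleave in the cyclic order.\<close>

definition crosses :: "nat set \<Rightarrow> nat set \<Rightarrow> bool" where
  "crosses e f \<longleftrightarrow>
     (\<exists>a b c d. e = {a, b} \<and> f = {c, d} \<and> a < c \<and> c < b \<and> b < d) \<or>
     (\<exists>a b c d. f = {a, b} \<and> e = {c, d} \<and> a < c \<and> c < b \<and> b < d)"

definition is_matching :: "nat \<Rightarrow> nat set set \<Rightarrow> bool" where
  "is_matching n M \<longleftrightarrow>
     (\<forall>e\<in>M. \<exists>a b. e = {a, b} \<and> a \<noteq> b \<and> a < n \<and> b < n) \<and>
     (\<forall>x<n. \<exists>!e. e \<in> M \<and> x \<in> e) \<and>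
     (\<forall>e\<in>M. \<forall>f\<in>M. \<not> crosses e f)"

text \<open>Adjacency in DCM: disjoint compatible matchings.\<close>
definition dcm_adj :: "nat \<Rightarrow> nat set set \<Rightarrow> nat set set \<Rightarrow> bool" where
  "dcm_adj n M M' \<longleftrightarrow> is_matching n M \<and> is_matching n M' \<and> M \<inter> M' = {} \<and>
     (\<forall>e\<in>M. \<forall>f\<in>M'. \<not> crosses e f)"

definition dcm_component :: "nat \<Rightarrow> nat set set \<Rightarrow> nat set set set" where
  "dcm_component n M = {M'. (dcm_adj n)\<^sup>*\<^sup>* M M'}"

definition block_at :: "nat \<Rightarrow> nat \<Rightarrow> nat set set" where
  "block_at n i = {{i mod n, (i + 3) mod n}, {(i + 1) mod n, (i + 2) mod n}}"

definition antiblock_at :: "nat \<Rightarrow> nat \<Rightarrow> nat set set" where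
  "antiblock_at n i = {{i mod n, (i + 1) mod n}, {(i + 2) mod n, (i + 3) mod n}}"

definition separated_pair :: "nat \<Rightarrow> nat set set \<Rightarrow> nat set set \<Rightarrow> bool" where
  "separated_pair n N K \<longleftrightarrow> (\<exists>i<n. (K = block_at n i \<or> K = antiblock_at n i) \<and> K \<subseteq> N)"

text \<open>N - K for a separated pair occupying points i,...,i+3: the remaining n-4 points
  are relabelled 0..n-5 in their inherited cyclic order, starting from point i+4.\<close>
definition remove_at :: "nat \<Rightarrow> nat set set \<Rightarrow> nat \<Rightarrow> nat set set" where
  "remove_at n N i = {{j, l} | j l. j < n - 4 \<and> l < n - 4 \<and>
       {(i + 4 + j) mod n, (i + 4 + l) mod n} \<in> N}"

definition rotate_matching :: "nat \<Rightarrow> nat \<Rightarrow> nat set set \<Rightarrow> nat set set" where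
  "rotate_matching m r M = (\<lambda>e. (\<lambda>x. (x + r) mod m) ` e) ` M"

end

theory Submission
  imports Defs
begin


definition cr :: "nat \<Rightarrow> nat \<Rightarrow> nat \<Rightarrow> nat \<Rightarrow> bool" where
  "cr a b c d \<longleftrightarrow> a \<noteq> b \<and> a \<noteq> c \<and> a \<noteq> d \<and> b \<noteq> c \<and> b \<noteq> d \<and> c \<noteq> d \<and>
     ((min a b < c \<and> c < max a b) \<noteq> (min a b < d \<and> d < max a b))"

lemma crosses_cr1: "crosses {a, b} {c, d} \<Longrightarrow> cr a b c d"
    unfolding crosses_def cr_def doubleton_eq_iff
    apply (elim disjE exE conjE) 
    apply (simp_all add: min_def max_def)
    done

lemma crosses_sym: "crosses e f \<Longrightarrow> crosses f e"
  unfolding crosses_def by blast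

lemma crosses_basic: "a < c \<Longrightarrow> c < b \<Longrightarrow> b < d \<Longrightarrow> crosses {a, b} {c, d}"
  unfolding crosses_def by blast

lemma crosses_cr2: assumes "cr a b c d" shows "crosses {a, b} {c, d}"
proof -
  have A: "crosses {x, y} {z, w}" if "x < y" "x < z" "z < y" "w < x \<or> y < w" for x y z w
  proof (cases "y < w")
    case True then show ?thesis using that crosses_basic by blast
  next
    case False
    then have "w < x" using that by auto
    then have "crosses {w, z} {x, y}" using that crosses_basic by blast
    then show ?thesis by (metis crosses_sym insert_commute)
  qed
  have B: "crosses {x, y} {z, w}" if "x < y" "cr x y z w" for x y z w
  proof (cases "x < z \<and> z < y")
    case True
    then have "w < x \<or> y < w" using that unfolding cr_def by auto
    then show ?thesis using A True that by auto
  next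
    case False
    then have "x < w" "w < y" "z < x \<or> y < z" using that unfolding cr_def by auto
    then show ?thesis using A[of x y w z] that by (metis insert_commute)
  qed
  show ?thesis
  proof (cases "a < b")
    case True then show ?thesis using B assms by blast
  next
    case False
    then have "b < a" "cr b a c d" using assms unfolding cr_def by auto
    then show ?thesis using B by (metis insert_commute)
  qed
qed

lemma crosses_cr: "crosses {a, b} {c, d} \<longleftrightarrow> cr a b c d"
  using crosses_cr1 crosses_cr2 by blast

lemma rot1: "(a::nat) < n \<Longrightarrow> (a + 1) mod n = (if a + 1 = n then 0 else a + 1)"
proof (cases "a + 1 = n")
  case True then show ?thesis by simp
next
  case False
  assume "a < n"
  with False have "a + 1 < n" by simp
  then show ?thesis using False by (simp only: mod_less if_False)
qed

lemma cr_rot1: assumes "a < n" "b < n" "c < n" "d < n"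
  shows "cr ((a+1) mod n) ((b+1) mod n) ((c+1) mod n) ((d+1) mod n) \<longleftrightarrow> cr a b c d"
  using assms unfolding rot1[OF assms(1)] rot1[OF assms(2)] rot1[OF assms(3)] rot1[OF assms(4)]
  unfolding cr_def min_def max_def by (auto split: if_splits)


lemma cr_rot: assumes "a < n" "b < n" "c < n" "d < n"
  shows "cr ((a+t) mod n) ((b+t) mod n) ((c+t) mod n) ((d+t) mod n) \<longleftrightarrow> cr a b c d"
proof (induction t)
  case 0 then show ?case using assms by simp
next
  case (Suc t)
  have n: "0 < n" using assms by simp
  have e: "(x + Suc t) mod n = ((x + t) mod n + 1) mod n" for x
    by (simp add: mod_Suc_eq)
  show ?case unfolding e using cr_rot1[of "(a+t) mod n" n "(b+t) mod n" "(c+t) mod n" "(d+t) mod n"] n Suc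
    by simp
qed

lemma crosses_rot: assumes "a < n" "b < n" "c < n" "d < n"
  shows "crosses {(a+t) mod n, (b+t) mod n} {(c+t) mod n, (d+t) mod n} \<longleftrightarrow> cr a b c d"
  using cr_rot[OF assms] crosses_cr by simp

lemma cr_shift: "cr (a+s) (b+s) (c+s) (d+s) \<longleftrightarrow> cr a b c d"
  unfolding cr_def min_def max_def by auto

lemma cr_out: "p < 4 \<Longrightarrow> q < 4 \<Longrightarrow> 4 \<le> x \<Longrightarrow> 4 \<le> y \<Longrightarrow> \<not> cr p q x y \<and> \<not> cr x y p q"
  unfolding cr_def min_def max_def by auto

lemma rot_inv: "(x::nat) < m \<Longrightarrow> (s + t) mod m = 0 \<Longrightarrow> ((x + s) mod m + t) mod m = x"
  by (metis mod_add_left_eq mod_add_right_eq add.assoc add_0_right mod_less)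



definition imgM :: "(nat \<Rightarrow> nat) \<Rightarrow> nat set set \<Rightarrow> nat set set" where
  "imgM h X = (\<lambda>e. h ` e) ` X"

lemma match_edge: "is_matching m X \<Longrightarrow> e \<in> X \<Longrightarrow> \<exists>a b. e = {a, b} \<and> a \<noteq> b \<and> a < m \<and> b < m"
  unfolding is_matching_def by blast

lemma match_cov: "is_matching m X \<Longrightarrow> x < m \<Longrightarrow> \<exists>!e. e \<in> X \<and> x \<in> e"
  unfolding is_matching_def by blast

lemma match_nc: "is_matching m X \<Longrightarrow> e \<in> X \<Longrightarrow> f \<in> X \<Longrightarrow> \<not> crosses e f"
  unfolding is_matching_def by blast

lemma match_sub: "is_matching m X \<Longrightarrow> e \<in> X \<Longrightarrow> e \<subseteq> {..<m}"
  using match_edge by fastforce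

definition goodT :: "nat \<Rightarrow> nat \<Rightarrow> (nat \<Rightarrow> nat) \<Rightarrow> nat set set \<Rightarrow> bool" where
  "goodT m n h T \<longleftrightarrow>
    (\<forall>e\<in>T. \<exists>a b. e = {a, b} \<and> a \<noteq> b \<and> a < n \<and> b < n \<and> a \<notin> h ` {..<m} \<and> b \<notin> h ` {..<m}) \<and>
    (\<forall>x<n. x \<notin> h ` {..<m} \<longrightarrow> (\<exists>!e. e \<in> T \<and> x \<in> e)) \<and>
    (\<forall>e\<in>T. \<forall>f\<in>T. \<not> crosses e f) \<and>
    (\<forall>e\<in>T. \<forall>a<m. \<forall>b<m. \<not> crosses e {h a, h b} \<and> \<not> crosses {h a, h b} e)"

definition goodh :: "nat \<Rightarrow> nat \<Rightarrow> (nat \<Rightarrow> nat) \<Rightarrow> bool" where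
  "goodh m n h \<longleftrightarrow> inj_on h {..<m} \<and> (\<forall>a<m. h a < n) \<and>
    (\<forall>a b c d. a<m \<longrightarrow> b<m \<longrightarrow> c<m \<longrightarrow> d<m \<longrightarrow>
        (crosses {h a, h b} {h c, h d} \<longleftrightarrow> crosses {a,b} {c,d}))"

lemma goodT_edge: "goodT m n h T \<Longrightarrow> e \<in> T \<Longrightarrow>
   \<exists>a b. e = {a, b} \<and> a \<noteq> b \<and> a < n \<and> b < n \<and> a \<notin> h ` {..<m} \<and> b \<notin> h ` {..<m}"
  unfolding goodT_def by blast
lemma goodT_cov: "goodT m n h T \<Longrightarrow> x < n \<Longrightarrow> x \<notin> h ` {..<m} \<Longrightarrow> \<exists>!e. e \<in> T \<and> x \<in> e"
  unfolding goodT_def by blast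
lemma goodT_nc: "goodT m n h T \<Longrightarrow> e \<in> T \<Longrightarrow> f \<in> T \<Longrightarrow> \<not> crosses e f"
  unfolding goodT_def by blast
lemma goodT_nc2: "goodT m n h T \<Longrightarrow> e \<in> T \<Longrightarrow> a < m \<Longrightarrow> b < m \<Longrightarrow>
   \<not> crosses e {h a, h b} \<and> \<not> crosses {h a, h b} e"
  unfolding goodT_def by blast
lemma goodh_inj: "goodh m n h \<Longrightarrow> inj_on h {..<m}" unfolding goodh_def by blast
lemma goodh_rng: "goodh m n h \<Longrightarrow> a < m \<Longrightarrow> h a < n" unfolding goodh_def by blast
lemma goodh_cr: "goodh m n h \<Longrightarrow> a<m \<Longrightarrow> b<m \<Longrightarrow> c<m \<Longrightarrow> d<m \<Longrightarrow>
        crosses {h a, h b} {h c, h d} \<longleftrightarrow> crosses {a,b} {c,d}" unfolding goodh_def by blast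

lemma imgM_edge:
  assumes "goodh m n h" "is_matching m X" "e \<in> imgM h X"
  shows "\<exists>a b. e = {h a, h b} \<and> a \<noteq> b \<and> a < m \<and> b < m \<and> {a, b} \<in> X"
  using assms match_edge unfolding imgM_def by fastforce

lemma imgM_T_disj:
  assumes "goodh m n h" "is_matching m X" "goodT m n h T"
  shows "imgM h X \<inter> T = {}"
proof -
  { fix e assume e1: "e \<in> imgM h X" and e2: "e \<in> T"
    obtain a b where ab: "e = {h a, h b}" "a < m" using imgM_edge[OF assms(1,2) e1] by blast
    obtain p q where "e = {p, q}" "p \<notin> h ` {..<m}" "q \<notin> h ` {..<m}"
      using goodT_edge[OF assms(3) e2] by blast
    then have False using ab by auto }
  then show ?thesis by blast
qed

lemma ins_matching:
  assumes h: "goodh m n h" and T: "goodT m n h T" and M: "is_matching m X"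
  shows "is_matching n (imgM h X \<union> T)"
proof -
  have inj: "inj_on h {..<m}" and rng: "\<And>a. a<m \<Longrightarrow> h a < n" using goodh_inj[OF h] goodh_rng[OF h] by auto
  have P1: "\<forall>e\<in>imgM h X \<union> T. \<exists>a b. e = {a, b} \<and> a \<noteq> b \<and> a < n \<and> b < n"
  proof
    fix e assume "e \<in> imgM h X \<union> T"
    then show "\<exists>a b. e = {a, b} \<and> a \<noteq> b \<and> a < n \<and> b < n"
    proof
      assume "e \<in> imgM h X"
      then obtain a b where "e = {h a, h b}" "a \<noteq> b" "a < m" "b < m"
        using imgM_edge[OF h M] by blast
      moreover then have "h a \<noteq> h b" using inj by (auto dest: inj_onD)
      ultimately show ?thesis using rng by blast
    next
      assume "e \<in> T" then show ?thesis using goodT_edge[OF T] by blast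
    qed
  qed
  have P2: "\<forall>x<n. \<exists>!e. e \<in> imgM h X \<union> T \<and> x \<in> e"
  proof (intro allI impI)
    fix x assume x: "x < n"
    show "\<exists>!e. e \<in> imgM h X \<union> T \<and> x \<in> e"
    proof (cases "x \<in> h ` {..<m}")
      case True
      then obtain a where a: "a < m" "x = h a" by auto
      then have "\<exists>!e. e \<in> X \<and> a \<in> e" using match_cov[OF M] by blast
      then obtain e0 where e0: "e0 \<in> X" "a \<in> e0" and u: "\<And>e. e \<in> X \<Longrightarrow> a \<in> e \<Longrightarrow> e = e0"
        by blast
      show ?thesis
      proof (rule ex1I[of _ "h ` e0"])
        show "h ` e0 \<in> imgM h X \<union> T \<and> x \<in> h ` e0" using e0 a unfolding imgM_def by auto
      next
        fix e assume e: "e \<in> imgM h X \<union> T \<and> x \<in> e"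
        show "e = h ` e0"
        proof (cases "e \<in> T")
          case True
          then obtain p q where "e = {p, q}" "p \<notin> h ` {..<m}" "q \<notin> h ` {..<m}"
            using goodT_edge[OF T] by blast
          then show ?thesis using e a by auto
        next
          case False
          then obtain e1 where e1: "e1 \<in> X" "e = h ` e1" using e unfolding imgM_def by auto
          then obtain a' where a': "a' \<in> e1" "h a' = h a" using e a by auto
          have "a' < m" using match_sub[OF M e1(1)] a' by auto
          then have "a' = a" using inj a a' by (auto dest: inj_onD)
          then have "e1 = e0" using u e1 a' by auto
          then show ?thesis using e1 by simp
        qed
      qed
    next
      case False
      have "\<exists>!e. e \<in> T \<and> x \<in> e" using goodT_cov[OF T x False] .
      then obtain e0 where e0: "e0 \<in> T" "x \<in> e0" and u: "\<And>e. e \<in> T \<Longrightarrow> x \<in> e \<Longrightarrow> e = e0"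
        by blast
      have nI: "\<And>e. e \<in> imgM h X \<Longrightarrow> x \<notin> e"
      proof
        fix e assume "e \<in> imgM h X" "x \<in> e"
        then obtain e1 where e1: "e1 \<in> X" "e = h ` e1" unfolding imgM_def by auto
        then have "e \<subseteq> h ` {..<m}" using match_sub[OF M e1(1)] by auto
        then show False using False \<open>x \<in> e\<close> by auto
      qed
      show ?thesis using e0 u nI by blast
    qed
  qed
  have P3: "\<forall>e\<in>imgM h X \<union> T. \<forall>f\<in>imgM h X \<union> T. \<not> crosses e f"
  proof (intro ballI)
    fix e f assume e: "e \<in> imgM h X \<union> T" and f: "f \<in> imgM h X \<union> T"
    show "\<not> crosses e f"
    proof (cases "e \<in> T")
      case eT: True
      show ?thesis
      proof (cases "f \<in> T")
        case True then show ?thesis using eT goodT_nc[OF T] by blast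
      next
        case False
        then obtain a b where "f = {h a, h b}" "a < m" "b < m" using f imgM_edge[OF h M] by blast
        then show ?thesis using eT goodT_nc2[OF T] by blast
      qed
    next
      case eT: False
      then obtain a b where ab: "e = {h a, h b}" "a < m" "b < m" "{a,b} \<in> X" using e imgM_edge[OF h M] by blast
      show ?thesis
      proof (cases "f \<in> T")
        case True then show ?thesis using ab goodT_nc2[OF T] by blast
      next
        case False
        then obtain c d where cd: "f = {h c, h d}" "c < m" "d < m" "{c,d} \<in> X" using f imgM_edge[OF h M] by blast
        have "\<not> crosses {a,b} {c,d}" using match_nc[OF M] ab cd by blast
        then show ?thesis using goodh_cr[OF h] ab cd by simp
      qed
    qed
  qed
  show ?thesis unfolding is_matching_def using P1 P2 P3 by (intro conjI)
qed

lemma ins_adj: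
  assumes h: "goodh m n h" and T: "goodT m n h T" and T': "goodT m n h T'"
    and TT: "T \<inter> T' = {}" and TTc: "\<forall>e\<in>T. \<forall>f\<in>T'. \<not> crosses e f"
    and A: "dcm_adj m X Y"
  shows "dcm_adj n (imgM h X \<union> T) (imgM h Y \<union> T')"
proof -
  have X: "is_matching m X" and Y: "is_matching m Y" and XY: "X \<inter> Y = {}"
    and XYc: "\<forall>e\<in>X. \<forall>f\<in>Y. \<not> crosses e f" using A unfolding dcm_adj_def by auto
  have inj: "inj_on h {..<m}" using goodh_inj[OF h] goodh_rng[OF h] by auto
  have D1: "imgM h X \<inter> imgM h Y = {}"
  proof -
    { fix e assume "e \<in> imgM h X" "e \<in> imgM h Y"
      then obtain e1 e2 where "e1 \<in> X" "e2 \<in> Y" "h ` e1 = h ` e2" unfolding imgM_def by auto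
      moreover then have "e1 = e2" using inj match_sub[OF X] match_sub[OF Y]
        by (metis inj_on_image_eq_iff)
      ultimately have False using XY by auto }
    then show ?thesis by blast
  qed
  have D: "(imgM h X \<union> T) \<inter> (imgM h Y \<union> T') = {}"
    using D1 TT imgM_T_disj[OF h X T'] imgM_T_disj[OF h Y T] by blast
  have C: "\<forall>e\<in>imgM h X \<union> T. \<forall>f\<in>imgM h Y \<union> T'. \<not> crosses e f"
  proof (intro ballI)
    fix e f assume e: "e \<in> imgM h X \<union> T" and f: "f \<in> imgM h Y \<union> T'"
    show "\<not> crosses e f"
    proof (cases "e \<in> T")
      case eT: True
      show ?thesis
      proof (cases "f \<in> T'")
        case True then show ?thesis using eT TTc by blast
      next
        case False
        then obtain a b where "f = {h a, h b}" "a < m" "b < m" using f imgM_edge[OF h Y] by blast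
        then show ?thesis using eT goodT_nc2[OF T] by blast
      qed
    next
      case eT: False
      then obtain a b where ab: "e = {h a, h b}" "a < m" "b < m" "{a,b} \<in> X" using e imgM_edge[OF h X] by blast
      show ?thesis
      proof (cases "f \<in> T'")
        case True then show ?thesis using ab goodT_nc2[OF T'] by blast
      next
        case False
        then obtain c d where cd: "f = {h c, h d}" "c < m" "d < m" "{c,d} \<in> Y" using f imgM_edge[OF h Y] by blast
        have "\<not> crosses {a,b} {c,d}" using XYc ab cd by blast
        then show ?thesis using goodh_cr[OF h] ab cd by simp
      qed
    qed
  qed
  show ?thesis unfolding dcm_adj_def
    using ins_matching[OF h T X] ins_matching[OF h T' Y] D C by blast
qed

lemma ins_inj:
  assumes h: "goodh m n h" and T: "goodT m n h T" and T': "goodT m n h T'"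
    and X: "is_matching m X" and Y: "is_matching m Y"
    and eq: "imgM h X \<union> T = imgM h Y \<union> T'"
  shows "X = Y"
proof -
  have inj: "inj_on h {..<m}" using goodh_inj[OF h] goodh_rng[OF h] by auto
  have s: "imgM h Z = {e \<in> imgM h Z \<union> S. e \<subseteq> h ` {..<m}}"
    if Z: "is_matching m Z" and S: "goodT m n h S" for Z S
  proof -
    have "e \<subseteq> h ` {..<m}" if "e \<in> imgM h Z" for e
      using that match_sub[OF Z] unfolding imgM_def by auto
    moreover have "\<not> e \<subseteq> h ` {..<m}" if eS: "e \<in> S" for e
    proof -
      obtain p q where "e = {p, q}" "p \<notin> h ` {..<m}" using goodT_edge[OF S eS] by blast
      then show ?thesis by auto
    qed
    ultimately show ?thesis by blast
  qed
  have "imgM h X = imgM h Y" using s[OF X T] s[OF Y T'] eq by simp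
  then have "(`) h ` X = (`) h ` Y" unfolding imgM_def by simp
  moreover have "X \<subseteq> Pow {..<m}" "Y \<subseteq> Pow {..<m}" using match_sub[OF X] match_sub[OF Y] by auto
  ultimately show ?thesis using inj_on_image_Pow[OF inj] by (metis inj_on_image_eq_iff)
qed



definition rho :: "nat \<Rightarrow> nat \<Rightarrow> nat \<Rightarrow> nat" where "rho n i x = (x + i) mod n"
definition rhoi :: "nat \<Rightarrow> nat \<Rightarrow> nat \<Rightarrow> nat" where "rhoi n i y = (y + (n - i)) mod n"
definition sig :: "nat \<Rightarrow> nat \<Rightarrow> nat \<Rightarrow> nat" where "sig m r a = (a + (m - r mod m)) mod m"
definition tau :: "nat \<Rightarrow> nat \<Rightarrow> nat \<Rightarrow> nat" where "tau m r a = (a + r) mod m"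
definition hh :: "nat \<Rightarrow> nat \<Rightarrow> nat \<Rightarrow> nat \<Rightarrow> nat \<Rightarrow> nat" where
  "hh m n i r a = rho n i (sig m r a + 4)"

lemma rho_lt: "0 < n \<Longrightarrow> rho n i x < n" unfolding rho_def by simp
lemma rhoi_lt: "0 < n \<Longrightarrow> rhoi n i x < n" unfolding rhoi_def by simp
lemma sig_lt: "0 < m \<Longrightarrow> sig m r x < m" unfolding sig_def by simp
lemma tau_lt: "0 < m \<Longrightarrow> tau m r x < m" unfolding tau_def by simp

lemma rhoi_rho: "i < n \<Longrightarrow> x < n \<Longrightarrow> rhoi n i (rho n i x) = x"
  unfolding rho_def rhoi_def by (rule rot_inv) simp_all
lemma rho_rhoi: "i < n \<Longrightarrow> y < n \<Longrightarrow> rho n i (rhoi n i y) = y"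
  unfolding rho_def rhoi_def by (rule rot_inv) simp_all
lemma rho_inj: "i < n \<Longrightarrow> x < n \<Longrightarrow> y < n \<Longrightarrow> rho n i x = rho n i y \<Longrightarrow> x = y"
  by (metis rhoi_rho)

lemma sm0: "0 < m \<Longrightarrow> ((r::nat) + (m - r mod m)) mod m = 0"
proof -
  assume m: "0 < m"
  have "(r + (m - r mod m)) mod m = (r mod m + (m - r mod m)) mod m" by (simp add: mod_add_left_eq)
  also have "r mod m + (m - r mod m) = m" using m by (simp add: less_imp_le)
  finally show ?thesis by simp
qed

lemma sig_tau: "0 < m \<Longrightarrow> a < m \<Longrightarrow> sig m r (tau m r a) = a"
  unfolding sig_def tau_def by (rule rot_inv[OF _ sm0])
lemma tau_sig: assumes "0 < m" "a < m" shows "tau m r (sig m r a) = a"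
proof -
  have "(m - r mod m + r) mod m = 0" using sm0[of m r] assms by (metis add.commute)
  then show ?thesis unfolding sig_def tau_def using assms by (rule_tac rot_inv)
qed

lemma crosses_rho: "a < n \<Longrightarrow> b < n \<Longrightarrow> c < n \<Longrightarrow> d < n \<Longrightarrow>
  crosses {rho n i a, rho n i b} {rho n i c, rho n i d} \<longleftrightarrow> cr a b c d"
  unfolding rho_def by (rule crosses_rot)

lemma hh_rhoi:
  assumes "0 < m" "n = m + 4" "i < n" "a < m"
  shows "rhoi n i (hh m n i r a) = sig m r a + 4"
  using assms sig_lt[of m r a] unfolding hh_def by (simp add: rhoi_rho)

lemma goodh_hh:
  assumes m: "0 < m" and n: "n = m + 4" and i: "i < n"
  shows "goodh m n (hh m n i r)"
  unfolding goodh_def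
proof (intro conjI allI impI)
  show "inj_on (hh m n i r) {..<m}"
  proof (rule inj_onI)
    fix a b assume a: "a \<in> {..<m}" and b: "b \<in> {..<m}" and e: "hh m n i r a = hh m n i r b"
    then have "sig m r a + 4 = sig m r b + 4" using hh_rhoi[OF m n i] by (metis lessThan_iff)
    then have "tau m r (sig m r a) = tau m r (sig m r b)" by simp
    then show "a = b" using tau_sig[OF m] a b by simp
  qed
next
  fix a assume "a < m" then show "hh m n i r a < n" unfolding hh_def using rho_lt n by simp
next
  fix a b c d assume abcd: "a < m" "b < m" "c < m" "d < m"
  have l: "sig m r x + 4 < n" for x using sig_lt[OF m] n by (simp add: add_less_le_mono)
  have "crosses {hh m n i r a, hh m n i r b} {hh m n i r c, hh m n i r d}
     \<longleftrightarrow> cr (sig m r a + 4) (sig m r b + 4) (sig m r c + 4) (sig m r d + 4)"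
    unfolding hh_def by (rule crosses_rho) (simp_all add: l)
  also have "\<dots> \<longleftrightarrow> cr (sig m r a) (sig m r b) (sig m r c) (sig m r d)" by (rule cr_shift)
  also have "\<dots> \<longleftrightarrow> cr a b c d" unfolding sig_def by (rule cr_rot) (simp_all add: abcd)
  also have "\<dots> \<longleftrightarrow> crosses {a, b} {c, d}" by (simp add: crosses_cr)
  finally show "crosses {hh m n i r a, hh m n i r b} {hh m n i r c, hh m n i r d} \<longleftrightarrow> crosses {a, b} {c, d}" .
qed

lemma hh_range:
  assumes m: "0 < m" and n: "n = m + 4" and i: "i < n" and y: "y < n"
  shows "y \<in> hh m n i r ` {..<m} \<longleftrightarrow> 4 \<le> rhoi n i y"
proof
  assume "y \<in> hh m n i r ` {..<m}"
  then obtain a where "a < m" "y = hh m n i r a" by auto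
  then show "4 \<le> rhoi n i y" using hh_rhoi[OF m n i] by simp
next
  assume h: "4 \<le> rhoi n i y"
  have lt: "rhoi n i y < n" using rhoi_lt n by simp
  define a where "a = tau m r (rhoi n i y - 4)"
  have "a < m" using tau_lt[OF m] a_def by simp
  moreover have "hh m n i r a = y"
    unfolding hh_def a_def using sig_tau[OF m, of "rhoi n i y - 4" r] lt n h rho_rhoi[OF i y] by simp
  ultimately show "y \<in> hh m n i r ` {..<m}" by (metis imageI lessThan_iff)
qed



lemma rho_inj_on: "i < n \<Longrightarrow> inj_on (rho n i) {..<n}"
  by (rule inj_onI) (metis lessThan_iff rhoi_rho)

lemma goodT_pair:
  assumes m: "0 < m" and n: "n = m + 4" and i: "i < n"
    and pqst: "{p, q, s, t} = {0, 1, 2, 3::nat}" "distinct [p, q, s, t]"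
    and nc: "\<not> cr p q s t" "\<not> cr s t p q"
  shows "goodT m n (hh m n i r) {{rho n i p, rho n i q}, {rho n i s, rho n i t}}"
proof -
  let ?h = "hh m n i r"
  have "p \<in> {0, 1, 2, 3::nat}" "q \<in> {0, 1, 2, 3::nat}" "s \<in> {0, 1, 2, 3::nat}" "t \<in> {0, 1, 2, 3::nat}"
    using pqst(1) by blast+
  then have lt4: "p < 4" "q < 4" "s < 4" "t < 4" by auto
  have ltn: "p < n" "q < n" "s < n" "t < n" using lt4 n by auto
  have rl: "rho n i x < n" for x using rho_lt n by simp
  have notr: "rho n i x \<notin> ?h ` {..<m}" if "x < 4" "x < n" for x
    using hh_range[OF m n i rl] rhoi_rho[OF i that(2)] that(1) by simp
  have "inj_on (rho n i) (set [p,q,s,t])" using ltn by (intro inj_on_subset[OF rho_inj_on[OF i]]) auto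
  then have "distinct (map (rho n i) [p, q, s, t])"
    unfolding distinct_map using pqst(2) by blast
  then have dist: "distinct [rho n i p, rho n i q, rho n i s, rho n i t]" by simp
  have C: "\<not> crosses {rho n i x, rho n i y} {?h a, ?h b} \<and> \<not> crosses {?h a, ?h b} {rho n i x, rho n i y}"
      if "x < 4" "y < 4" "a < m" "b < m" for x y a b
  proof -
    have l: "sig m r x + 4 < n" for x using sig_lt[OF m] n by (simp add: add_less_le_mono)
    have hx: "?h x = rho n i (sig m r x + 4)" for x unfolding hh_def by simp
    have "x < n" "y < n" using that n by auto
    then show ?thesis unfolding hx using crosses_rho[of _ n] l cr_out[OF that(1,2), of "sig m r a + 4" "sig m r b + 4"] by simp
  qed
  show ?thesis unfolding goodT_def
  proof (intro conjI ballI allI impI)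
    fix e assume "e \<in> {{rho n i p, rho n i q}, {rho n i s, rho n i t}}"
    then show "\<exists>a b. e = {a, b} \<and> a \<noteq> b \<and> a < n \<and> b < n \<and> a \<notin> ?h ` {..<m} \<and> b \<notin> ?h ` {..<m}"
    proof
      assume "e = {rho n i p, rho n i q}"
      then show ?thesis using dist notr lt4 ltn rl by (intro exI[of _ "rho n i p"] exI[of _ "rho n i q"]) simp
    next
      assume "e \<in> {{rho n i s, rho n i t}}"
      then show ?thesis using dist notr lt4 ltn rl by (intro exI[of _ "rho n i s"] exI[of _ "rho n i t"]) simp
    qed
  next
    fix x assume x: "x < n" "x \<notin> ?h ` {..<m}"
    then have "rhoi n i x < 4" using hh_range[OF m n i x(1)] by simp
    then have "rhoi n i x \<in> {p, q, s, t}" using pqst(1) by auto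
    moreover have "x = rho n i (rhoi n i x)" using rho_rhoi[OF i x(1)] by simp
    ultimately have xin: "x \<in> {rho n i p, rho n i q, rho n i s, rho n i t}" by auto
    show "\<exists>!e. e \<in> {{rho n i p, rho n i q}, {rho n i s, rho n i t}} \<and> x \<in> e"
    proof (cases "x \<in> {rho n i p, rho n i q}")
      case True
      then have "x \<notin> {rho n i s, rho n i t}" using dist by auto
      then show ?thesis using True by blast
    next
      case False
      then have "x \<in> {rho n i s, rho n i t}" using xin by blast
      then show ?thesis using False by blast
    qed
  next
    fix e f assume e: "e \<in> {{rho n i p, rho n i q}, {rho n i s, rho n i t}}"
      and f: "f \<in> {{rho n i p, rho n i q}, {rho n i s, rho n i t}}"
    have same: "\<not> cr x y x y" for x y unfolding cr_def by simp
    have c1: "\<not> crosses {rho n i p, rho n i q} {rho n i p, rho n i q}" using crosses_rho ltn same by metis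
    have c2: "\<not> crosses {rho n i s, rho n i t} {rho n i s, rho n i t}" using crosses_rho ltn same by metis
    have c3: "\<not> crosses {rho n i p, rho n i q} {rho n i s, rho n i t}" using crosses_rho ltn nc by metis
    have c4: "\<not> crosses {rho n i s, rho n i t} {rho n i p, rho n i q}" using crosses_rho ltn nc by metis
    show "\<not> crosses e f" using e f c1 c2 c3 c4 by blast
  next
    fix e a b assume e: "e \<in> {{rho n i p, rho n i q}, {rho n i s, rho n i t}}" and ab: "a < m" "b < m"
    show "\<not> crosses e {?h a, ?h b}" using e C[OF _ _ ab] lt4 by blast
  next
    fix e a b assume e: "e \<in> {{rho n i p, rho n i q}, {rho n i s, rho n i t}}" and ab: "a < m" "b < m"
    show "\<not> crosses {?h a, ?h b} e" using e C[OF _ _ ab] lt4 by blast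
  qed
qed



lemma hh_tau: "0 < m \<Longrightarrow> j < m \<Longrightarrow> hh m n i r (tau m r j) = rho n i (j + 4)"
  unfolding hh_def by (simp add: sig_tau)

lemma N_decomp:
  assumes m: "0 < m" and n: "n = m + 4" and i: "i < n" and N: "is_matching n N"
    and K: "goodT m n (hh m n i r) K" "K \<subseteq> N"
    and R: "rotate_matching m r (remove_at n N i) = M"
  shows "N = imgM (hh m n i r) M \<union> K"
proof -
  let ?h = "hh m n i r"
  define E where "E = {{rho n i (j + 4), rho n i (l + 4)} | j l. j < m \<and> l < m \<and> {rho n i (j + 4), rho n i (l + 4)} \<in> N}"
  have tau_eq: "(\<lambda>x. (x + r) mod m) = tau m r" unfolding tau_def by (rule ext) simp
  have rem: "remove_at n N i = {{j, l} | j l. j < m \<and> l < m \<and> {rho n i (j + 4), rho n i (l + 4)} \<in> N}"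
    unfolding remove_at_def rho_def using n by (simp add: add.commute add.left_commute)
  have M: "M = (\<lambda>e. tau m r ` e) ` {{j, l} | j l. j < m \<and> l < m \<and> {rho n i (j + 4), rho n i (l + 4)} \<in> N}"
    using R unfolding rotate_matching_def rem tau_eq by simp
  have img: "imgM ?h M = E"
  proof
    show "imgM ?h M \<subseteq> E"
    proof
      fix e assume "e \<in> imgM ?h M"
      then obtain j l where jl: "j < m" "l < m" "{rho n i (j + 4), rho n i (l + 4)} \<in> N"
        "e = ?h ` tau m r ` {j, l}" unfolding imgM_def M by blast
      then have "e = {rho n i (j + 4), rho n i (l + 4)}" using hh_tau[OF m] by simp
      then show "e \<in> E" unfolding E_def using jl by blast
    qed
  next
    show "E \<subseteq> imgM ?h M"
    proof
      fix e assume "e \<in> E"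
      then obtain j l where jl: "j < m" "l < m" "{rho n i (j + 4), rho n i (l + 4)} \<in> N"
        "e = {rho n i (j + 4), rho n i (l + 4)}" unfolding E_def by blast
      then have "e = ?h ` tau m r ` {j, l}" using hh_tau[OF m] by simp
      moreover have "{j, l} \<in> {{j, l} | j l. j < m \<and> l < m \<and> {rho n i (j + 4), rho n i (l + 4)} \<in> N}"
        using jl by blast
      ultimately show "e \<in> imgM ?h M" unfolding imgM_def M by blast
    qed
  qed
  have "N \<subseteq> E \<union> K"
  proof
    fix e assume eN: "e \<in> N"
    show "e \<in> E \<union> K"
    proof (cases "e \<in> K")
      case True then show ?thesis by simp
    next
      case False
      obtain x y where xy: "e = {x, y}" "x < n" "y < n" using match_edge[OF N eN] by blast
      have big: "4 \<le> rhoi n i z" if z: "z \<in> e" "z < n" for z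
      proof (rule ccontr)
        assume "\<not> 4 \<le> rhoi n i z"
        then have "z \<notin> ?h ` {..<m}" using hh_range[OF m n i z(2)] by simp
        then obtain e' where "e' \<in> K" "z \<in> e'" using goodT_cov[OF K(1) z(2)] by blast
        moreover have "\<exists>!e. e \<in> N \<and> z \<in> e" using match_cov[OF N z(2)] .
        ultimately have "e' = e" using K(2) eN z(1) by blast
        then show False using False \<open>e' \<in> K\<close> by simp
      qed
      have rep: "\<exists>j. j < m \<and> rho n i (j + 4) = z" if z: "z \<in> e" "z < n" for z
      proof (intro exI conjI)
        have "rhoi n i z < m + 4" using rhoi_lt[of n i z] n by simp
        then show "rhoi n i z - 4 < m" using m by linarith
        show "rho n i (rhoi n i z - 4 + 4) = z" using big[OF z] rho_rhoi[OF i z(2)] by simp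
      qed
      obtain j where j: "j < m" "rho n i (j + 4) = x" using rep xy by blast
      obtain l where l: "l < m" "rho n i (l + 4) = y" using rep xy by blast
      have "e \<in> E" unfolding E_def using j l xy eN by blast
      then show ?thesis by simp
    qed
  qed
  moreover have "E \<subseteq> N" unfolding E_def by blast
  ultimately show ?thesis using img K(2) by blast
qed



lemma comp_matching: "is_matching n N \<Longrightarrow> X \<in> dcm_component n N \<Longrightarrow> is_matching n X"
  unfolding dcm_component_def
  by (auto elim: rtranclp.cases simp: dcm_adj_def)

lemma comp_finite: assumes "is_matching n N" shows "finite (dcm_component n N)"
proof (rule finite_subset)
  show "dcm_component n N \<subseteq> Pow (Pow {..<n})"
    using comp_matching[OF assms] match_sub by blast
qed simp

lemma main_general:
  assumes m: "0 < m" and n: "n = m + 4" and i: "i < n" and M: "is_matching m M"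
    and N: "is_matching n N"
    and KK: "block_at n i \<subseteq> N \<or> antiblock_at n i \<subseteq> N"
    and R: "\<exists>r. rotate_matching m r (remove_at n N i) = M"
  shows "card (dcm_component m M) \<le> card (dcm_component n N)"
proof -
  obtain r where r: "rotate_matching m r (remove_at n N i) = M" using R by blast
  define h where "h = hh m n i r"
  define B where "B = {{rho n i 0, rho n i 3}, {rho n i 1, rho n i 2}}"
  define A where "A = {{rho n i 0, rho n i 1}, {rho n i 2, rho n i 3}}"
  have Bdef: "block_at n i = B" unfolding B_def block_at_def rho_def by (simp add: add.commute)
  have Adef: "antiblock_at n i = A" unfolding A_def antiblock_at_def rho_def by (simp add: add.commute)
  have gB: "goodT m n h B" unfolding B_def h_def
    by (rule goodT_pair[OF m n i]) (auto simp: cr_def)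
  have gA: "goodT m n h A" unfolding A_def h_def
    by (rule goodT_pair[OF m n i]) (auto simp: cr_def)
  have gh: "goodh m n h" unfolding h_def by (rule goodh_hh[OF m n i])
  have lt: "(0::nat) < n" "(1::nat) < n" "(2::nat) < n" "(3::nat) < n" using n by auto
  have "inj_on (rho n i) (set [0,1,2,3])" using lt by (intro inj_on_subset[OF rho_inj_on[OF i]]) auto
  then have "distinct (map (rho n i) [0,1,2,3])" unfolding distinct_map by simp
  then have dist: "distinct [rho n i 0, rho n i 1, rho n i 2, rho n i 3]" by simp
  have AB: "B \<inter> A = {}" "A \<inter> B = {}" unfolding A_def B_def using dist by (auto simp: doubleton_eq_iff)
  have crs: "crosses {rho n i a, rho n i b} {rho n i c, rho n i d} \<longleftrightarrow> cr a b c d"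
    if "a < 4" "b < 4" "c < 4" "d < 4" for a b c d
    using crosses_rho that n by simp
  have ABc: "\<forall>e\<in>B. \<forall>f\<in>A. \<not> crosses e f" "\<forall>e\<in>A. \<forall>f\<in>B. \<not> crosses e f"
    unfolding A_def B_def by (auto simp: crs cr_def)
  have Nd: "N = imgM h M \<union> B \<or> N = imgM h M \<union> A"
    using KK N_decomp[OF m n i N _ _ r] gA gB Bdef Adef unfolding h_def by metis
  have claim: "is_matching m X \<and> (imgM h X \<union> B \<in> dcm_component n N \<or> imgM h X \<union> A \<in> dcm_component n N)"
    if "(dcm_adj m)\<^sup>*\<^sup>* M X" for X
    using that
  proof (induction rule: rtranclp_induct)
    case base
    then show ?case using M Nd unfolding dcm_component_def by auto
  next
    case (step Y Z)
    have Zm: "is_matching m Z" using step.hyps(2) unfolding dcm_adj_def by simp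
    from step.IH show ?case
    proof (elim conjE disjE)
      assume "imgM h Y \<union> B \<in> dcm_component n N"
      moreover have "dcm_adj n (imgM h Y \<union> B) (imgM h Z \<union> A)"
        by (rule ins_adj[OF gh gB gA AB(1) ABc(1) step.hyps(2)])
      ultimately show ?thesis using Zm unfolding dcm_component_def
        by (auto intro: rtranclp.rtrancl_into_rtrancl)
    next
      assume "imgM h Y \<union> A \<in> dcm_component n N"
      moreover have "dcm_adj n (imgM h Y \<union> A) (imgM h Z \<union> B)"
        by (rule ins_adj[OF gh gA gB AB(2) ABc(2) step.hyps(2)])
      ultimately show ?thesis using Zm unfolding dcm_component_def
        by (auto intro: rtranclp.rtrancl_into_rtrancl)
    qed
  qed
  define f where "f X = (if imgM h X \<union> B \<in> dcm_component n N then imgM h X \<union> B else imgM h X \<union> A)" for X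
  have fin: "f X \<in> dcm_component n N" if "X \<in> dcm_component m M" for X
    using claim[of X] that unfolding f_def dcm_component_def by auto
  have inj: "inj_on f (dcm_component m M)"
  proof (rule inj_onI)
    fix X Y assume X: "X \<in> dcm_component m M" and Y: "Y \<in> dcm_component m M" and e: "f X = f Y"
    have Xm: "is_matching m X" and Ym: "is_matching m Y"
      using claim X Y unfolding dcm_component_def by auto
    have fX: "\<exists>T. goodT m n h T \<and> f X = imgM h X \<union> T" unfolding f_def using gA gB by auto
    have fY: "\<exists>T. goodT m n h T \<and> f Y = imgM h Y \<union> T" unfolding f_def using gA gB by auto
    from fX fY e show "X = Y" using ins_inj[OF gh _ _ Xm Ym] by metis
  qed
  show ?thesis
    by (rule card_inj_on_le[OF inj]) (use fin comp_finite[OF N] in auto)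
qed


theorem mainTheorem9:
  fixes k :: nat and M N :: "nat set set" and i :: nat
  assumes "k \<ge> 1"
    and "is_matching (2 * k) M"
    and "is_matching (2 * k + 4) N"
    and "i < 2 * k + 4"
    and "block_at (2 * k + 4) i \<subseteq> N \<or> antiblock_at (2 * k + 4) i \<subseteq> N"
    and "\<exists>r. rotate_matching (2 * k) r (remove_at (2 * k + 4) N i) = M"
  shows "card (dcm_component (2 * k) M) \<le> card (dcm_component (2 * k + 4) N)"
  by (rule main_general) (use assms in auto)

end
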